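(* Let $K\ge1$ be an integer, $n\ge0$, let $P_n(x,y),Q_n(x,y)$ be real polynomials of degree $n$, and let $\mathrm{a}_1,\ldots,\mathrm{a}_K$ be pairwise distinct nonzero real numbers. For $0<r<\min_j|\mathrm{a}_j|$ let $\gamma_r=\{(x,y):x^2+y^2=r^2\}$ and \[ I(r)=\int_{\gamma_r}\frac{Q_n(x,y)\,dx-P_n(x,y)\,dy}{\prod_{j=1}^K(x-\mathrm{a}_j)}. \] Let $\widetilde K=\operatorname{card}\{|\mathrm{a}_1|,\ldots,|\mathrm{a}_K|\}$ and let $\widetilde{\mathrm{a}}_1,\ldots,\widetilde{\mathrm{a}}_{\widetilde K}$ be the distinct values of $\{|\mathrm{a}_1|,\ldots,|\mathrm{a}_K|\}$. Then there exist real polynomials $S^j(\rho)$, $j=1,\ldots,\widetilde K$, of degree at most $[(n-1)/2]+1$ and a real polynomial $T(\rho)$ of degree at most $[n/2]$ such that for all $0<r<\min_j|\mathrm{a}_j|$, \[ I(r)=\sum_{j=1}^{\widetilde K}\frac{S^j(r^2)}{\sqrt{\widetilde{\mathrm{a}}_j^2-r^2}}+T(r^2). \]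
   Context: $[s]$ denotes the integer part of $s$. The circle $\gamma_r$ is parametrized by $(r\cos\theta,r\sin\theta)$, $\theta\in[0,2\pi]$. *)

theory Defs
  imports "HOL-Analysis.Analysis" "HOL-Computational_Algebra.Polynomial"
begin

definition bipoly_eval :: "(nat \<Rightarrow> nat \<Rightarrow> real) \<Rightarrow> nat \<Rightarrow> real \<Rightarrow> real \<Rightarrow> real" where
  "bipoly_eval c n x y = (\<Sum>i\<le>n. \<Sum>j\<le>n - i. c i j * x ^ i * y ^ j)"

definition bipoly_degree :: "(nat \<Rightarrow> nat \<Rightarrow> real) \<Rightarrow> nat \<Rightarrow> bool" where
  "bipoly_degree c n \<longleftrightarrow> (\<forall>i j. c i j \<noteq> 0 \<longrightarrow> i + j \<le> n) \<and> (\<exists>i j. i + j = n \<and> c i j \<noteq> 0)"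

definition circle_line_integral ::
  "(real \<Rightarrow> real \<Rightarrow> real) \<Rightarrow> (real \<Rightarrow> real \<Rightarrow> real) \<Rightarrow> real \<Rightarrow> real" where
  "circle_line_integral F G r =
     integral {0..2*pi} (\<lambda>t. F (r * cos t) (r * sin t) * (- r * sin t)
                            + G (r * cos t) (r * sin t) * (r * cos t))"

end

theory Submission
  imports Defs "HOL-Computational_Algebra.Polynomial"
begin

lemma J_integral:
  fixes A B :: real
  assumes AB: "\<bar>B\<bar> < A"
  shows "((\<lambda>t. 1 / (A + B * cos t)) has_integral (2*pi / sqrt (A\<^sup>2 - B\<^sup>2))) {0..2*pi}"
proof -
  define s where "s = sqrt (A\<^sup>2 - B\<^sup>2)"
  have BA: "B\<^sup>2 < A\<^sup>2" using AB
    using power_strict_mono[OF AB abs_ge_zero, of 2] by simp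
  have s2: "s\<^sup>2 = A\<^sup>2 - B\<^sup>2" unfolding s_def using BA by simp
  have spos: "s > 0" unfolding s_def using BA by simp
  have denpos: "A + s + B * cos t > 0" for t
  proof -
    have "\<bar>B * cos t\<bar> \<le> \<bar>B\<bar>" by (simp add: abs_mult mult_left_le)
    then show ?thesis using AB spos by linarith
  qed
  have Apos: "A + B * cos t > 0" for t
  proof -
    have "\<bar>B * cos t\<bar> \<le> \<bar>B\<bar>" by (simp add: abs_mult mult_left_le)
    then show ?thesis using AB by linarith
  qed
  define F where "F t = (t - 2 * arctan (B * sin t / (A + s + B * cos t))) / s" for t
  have deriv: "(F has_real_derivative 1 / (A + B * cos t)) (at t)" for t
  proof -
    define d where "d = A + s + B * cos t"
    have dpos: "d > 0" using denpos d_def by simp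
    have du: "((\<lambda>t. B * sin t / (A + s + B * cos t)) has_real_derivative
        (B * cos t * d - B * sin t * (- (B * sin t))) / d\<^sup>2) (at t)"
    proof -
      have h1: "((\<lambda>t. B * sin t) has_real_derivative B * cos t) (at t)"
        by (auto intro!: derivative_eq_intros)
      have h2: "((\<lambda>t. A + s + B * cos t) has_real_derivative - (B * sin t)) (at t)"
        by (auto intro!: derivative_eq_intros)
      show ?thesis
        using DERIV_quotient[OF h1 h2 denpos[of t, THEN less_imp_neq, symmetric]]
        unfolding d_def by (rule DERIV_cong) (simp add: power2_eq_square algebra_simps)
    qed
    have da: "((\<lambda>t. arctan (B * sin t / (A + s + B * cos t))) has_real_derivative
        inverse (1 + (B * sin t / d)\<^sup>2) * ((B * cos t * d - B * sin t * (- (B * sin t))) / d\<^sup>2)) (at t)"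
      using DERIV_chain2[OF DERIV_arctan du] unfolding d_def by simp
    have "(F has_real_derivative
       (1 - 2 * (inverse (1 + (B * sin t / d)\<^sup>2) * ((B * cos t * d - B * sin t * (- (B * sin t))) / d\<^sup>2))) / s) (at t)"
      unfolding F_def
      by (intro DERIV_cdivide DERIV_diff DERIV_cmult da DERIV_ident)
    then have "(F has_real_derivative
       (1 - 2 * ((B * cos t * d - B * sin t * (- (B * sin t))) / d\<^sup>2 / (1 + (B * sin t / d)\<^sup>2))) / s) (at t)"
      by (simp add: divide_inverse mult.commute)
    moreover have "(1 - 2 * ((B * cos t * d - B * sin t * (- (B * sin t))) / d\<^sup>2 / (1 + (B * sin t / d)\<^sup>2))) / s
        = 1 / (A + B * cos t)"
    proof -
      have e1: "(B * cos t * d - B * sin t * (- (B * sin t))) / d\<^sup>2 / (1 + (B * sin t / d)\<^sup>2)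
          = (B * cos t * d + B\<^sup>2 * (sin t)\<^sup>2) / (d\<^sup>2 + B\<^sup>2 * (sin t)\<^sup>2)"
      proof -
        have "1 + (B * sin t / d)\<^sup>2 = (d\<^sup>2 + B\<^sup>2 * (sin t)\<^sup>2) / d\<^sup>2"
          using dpos by (simp add: field_simps power2_eq_square)
        moreover have "d\<^sup>2 \<noteq> 0" using dpos by simp
        moreover have gen: "\<And>x z c::real. c \<noteq> 0 \<Longrightarrow> (x/c)/(z/c) = x/z"
          by (case_tac "z = 0") (auto simp: field_simps)
        moreover have "B * cos t * d - B * sin t * (- (B * sin t)) = B * cos t * d + B\<^sup>2 * (sin t)\<^sup>2"
          by (simp add: power2_eq_square)
        ultimately show ?thesis by simp
      qed
      have e2: "d\<^sup>2 + B\<^sup>2 * (sin t)\<^sup>2 = 2 * (A + s) * (A + B * cos t)"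
      proof -
        have "d\<^sup>2 + B\<^sup>2 * (sin t)\<^sup>2 = (A+s)\<^sup>2 + 2*(A+s)*B*cos t + B\<^sup>2"
          unfolding d_def sin_squared_eq by (simp add: power2_eq_square algebra_simps)
        also have "\<dots> = 2 * (A + s) * (A + B * cos t)" using s2 by (simp add: power2_eq_square algebra_simps)
        finally show ?thesis .
      qed
      have e3: "B * cos t * d + B\<^sup>2 * (sin t)\<^sup>2 = (A + s) * (A + B * cos t - s)"
      proof -
        have "B * cos t * d + B\<^sup>2 * (sin t)\<^sup>2 = B*cos t*(A+s) + B\<^sup>2"
          unfolding d_def sin_squared_eq by (simp add: power2_eq_square algebra_simps)
        also have "\<dots> = (A + s) * (A + B * cos t - s)" using s2 by (simp add: power2_eq_square algebra_simps)
        finally show ?thesis .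
      qed
      have Aspos: "A + s > 0" using AB spos by linarith
      have "(1 - 2 * ((A + s) * (A + B * cos t - s) / (2 * (A + s) * (A + B * cos t)))) / s = 1 / (A + B * cos t)"
      proof -
        have gen: "\<And>X Y s::real. X > 0 \<Longrightarrow> Y > 0 \<Longrightarrow> s > 0 \<Longrightarrow> (1 - 2*(Y*(X-s)/(2*Y*X)))/s = 1/X"
          by (simp add: field_simps)
        show ?thesis using gen[OF Apos[of t] Aspos spos] by simp
      qed
      then show ?thesis using e1 e2 e3 by simp
    qed
    ultimately show ?thesis by simp
  qed
  have "((\<lambda>t. 1 / (A + B * cos t)) has_integral (F (2*pi) - F 0)) {0..2*pi}"
    apply (rule fundamental_theorem_of_calculus)
     apply simp
    using deriv by (simp add: has_real_derivative_iff_has_vector_derivative has_vector_derivative_at_within)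
  moreover have "F (2*pi) - F 0 = 2*pi / s" unfolding F_def by (simp add: diff_divide_distrib)
  ultimately show ?thesis unfolding s_def by simp
qed



lemma integral_antisym_zero:
  fixes f :: "real \<Rightarrow> real"
  assumes "\<And>t. t \<in> {a..b} \<Longrightarrow> f (a + b - t) = - f t"
  shows "integral {a..b} f = 0"
proof -
  have "integral {a..b} (\<lambda>t. f (a + b - t)) = integral {-b..-a} (\<lambda>x. f (- x))"
    using integral_shift_real_ivl[where f="\<lambda>x. f (- x)" and a="-b" and c="-(a+b)" and b="-a"] by (simp add: algebra_simps)
  also have "\<dots> = integral {a..b} f" by simp
  finally have e: "integral {a..b} (\<lambda>t. f (a + b - t)) = integral {a..b} f" .
  have "integral {a..b} (\<lambda>t. f (a + b - t)) = integral {a..b} (\<lambda>t. - f t)"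
    by (rule integral_cong) (use assms in auto)
  then show ?thesis using e by simp
qed

definition lw :: "real set \<Rightarrow> real \<Rightarrow> real" where
  "lw A c = 1 / (\<Prod>d\<in>A-{c}. (c - d))"

lemma lagrange_pf:
  fixes A :: "real set"
  assumes "finite A" "A \<noteq> {}" "x \<notin> A"
  shows "1 / (\<Prod>c\<in>A. (x - c)) = (\<Sum>c\<in>A. lw A c / (x - c))"
proof -
  define P where "P = (\<Sum>c\<in>A. smult (lw A c) (\<Prod>d\<in>A-{c}. [:-d, 1:]))"
  have degP: "degree P \<le> card A - 1"
    unfolding P_def
  proof (rule degree_sum_le)
    fix c assume c: "c \<in> A"
    have "degree (smult (lw A c) (\<Prod>d\<in>A-{c}. [:-d, 1:])) \<le> degree (\<Prod>d\<in>A-{c}. [:-d, 1:])"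
      by (rule degree_smult_le)
    also have "\<dots> \<le> (\<Sum>d\<in>A-{c}. degree [:-d, 1:])" using degree_prod_sum_le[of "A-{c}" "\<lambda>d. [:-d, 1:]"] assms(1) by (simp add: o_def)
    also have "\<dots> = card (A - {c})" by simp
    also have "\<dots> = card A - 1" using c assms(1) by simp
    finally show "degree (smult (lw A c) (\<Prod>d\<in>A-{c}. [:-d, 1:])) \<le> card A - 1" .
  qed (rule assms(1))
  have cardpos: "card A > 0" using assms by auto
  have P1: "P = 1"
  proof (rule poly_eqI_degree[of A])
    fix c assume c: "c \<in> A"
    have nz: "(\<Prod>d\<in>A-{c}. (c - d)) \<noteq> 0"
      using assms(1) by (simp add: prod_zero_iff)
    have "poly P c = (\<Sum>c'\<in>A. lw A c' * (\<Prod>d\<in>A-{c'}. (c - d)))"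
      unfolding P_def by (simp add: poly_sum poly_prod)
    also have "\<dots> = lw A c * (\<Prod>d\<in>A-{c}. (c - d))
         + (\<Sum>c'\<in>A-{c}. lw A c' * (\<Prod>d\<in>A-{c'}. (c - d)))"
      by (rule sum.remove[OF assms(1) c])
    also have "(\<Sum>c'\<in>A-{c}. lw A c' * (\<Prod>d\<in>A-{c'}. (c - d))) = 0"
    proof (rule sum.neutral, intro ballI)
      fix c' assume c': "c' \<in> A - {c}"
      have "(\<Prod>d\<in>A-{c'}. (c - d)) = 0"
        using c c' assms(1) by (subst prod_zero_iff) auto
      then show "lw A c' * (\<Prod>d\<in>A-{c'}. (c - d)) = 0" by simp
    qed
    finally show "poly P c = poly 1 c" using nz by (simp add: lw_def)
  qed (use degP cardpos in auto)
  have xn: "x - c \<noteq> 0" if "c \<in> A" for c using assms(3) that by auto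
  have Dnz: "(\<Prod>c\<in>A. (x - c)) \<noteq> 0" using assms(1) xn by (simp add: prod_zero_iff)
  have "1 = poly P x" using P1 by simp
  also have "\<dots> = (\<Sum>c\<in>A. lw A c * (\<Prod>d\<in>A-{c}. (x - d)))"
    unfolding P_def by (simp add: poly_sum poly_prod)
  also have "\<dots> = (\<Sum>c\<in>A. lw A c / (x - c) * (\<Prod>c\<in>A. (x - c)))"
  proof (rule sum.cong[OF refl])
    fix c assume c: "c \<in> A"
    have "(\<Prod>c\<in>A. (x - c)) = (x - c) * (\<Prod>d\<in>A-{c}. (x - d))"
      by (rule prod.remove[OF assms(1) c])
    then show "lw A c * (\<Prod>d\<in>A-{c}. (x - d)) = lw A c / (x - c) * (\<Prod>c\<in>A. (x - c))"
      using xn[OF c] by simp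
  qed
  also have "\<dots> = (\<Sum>c\<in>A. lw A c / (x - c)) * (\<Prod>c\<in>A. (x - c))"
    by (simp add: sum_distrib_right)
  finally show ?thesis using Dnz by (simp add: field_simps)
qed



definition good :: "real set \<Rightarrow> real \<Rightarrow> nat \<Rightarrow> (real \<Rightarrow> real) \<Rightarrow> bool" where
  "good B m d f \<longleftrightarrow> (\<exists>S T. (\<forall>b\<in>B. degree (S b) \<le> d div 2) \<and> (T = 0 \<or> 2 * degree T < d) \<and>
     (\<forall>r. 0 < r \<and> r < m \<longrightarrow> f r = (\<Sum>b\<in>B. poly (S b) (r\<^sup>2) / sqrt (b\<^sup>2 - r\<^sup>2)) + poly T (r\<^sup>2)))"

lemma good_cong:
  assumes "good B m d f" "\<And>r. 0 < r \<Longrightarrow> r < m \<Longrightarrow> f r = g r"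
  shows "good B m d g"
proof -
  obtain S T where 1: "\<forall>b\<in>B. degree (S b) \<le> d div 2" "T = 0 \<or> 2 * degree T < d"
    "\<forall>r. 0 < r \<and> r < m \<longrightarrow> f r = (\<Sum>b\<in>B. poly (S b) (r\<^sup>2) / sqrt (b\<^sup>2 - r\<^sup>2)) + poly T (r\<^sup>2)"
    using assms(1) unfolding good_def by blast
  show ?thesis unfolding good_def
    by (rule exI[of _ S], rule exI[of _ T]) (use 1 assms(2) in auto)
qed

lemma good_zero: "good B m d (\<lambda>r. 0)"
  unfolding good_def by (rule exI[of _ "\<lambda>_. 0"], rule exI[of _ 0]) simp

lemma good_add:
  assumes "good B m d f" "good B m d g"
  shows "good B m d (\<lambda>r. f r + g r)"
proof -
  obtain S1 T1 where 1: "\<forall>b\<in>B. degree (S1 b) \<le> d div 2" "T1 = 0 \<or> 2 * degree T1 < d"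
    "\<forall>r. 0 < r \<and> r < m \<longrightarrow> f r = (\<Sum>b\<in>B. poly (S1 b) (r\<^sup>2) / sqrt (b\<^sup>2 - r\<^sup>2)) + poly T1 (r\<^sup>2)"
    using assms(1) unfolding good_def by blast
  obtain S2 T2 where 2: "\<forall>b\<in>B. degree (S2 b) \<le> d div 2" "T2 = 0 \<or> 2 * degree T2 < d"
    "\<forall>r. 0 < r \<and> r < m \<longrightarrow> g r = (\<Sum>b\<in>B. poly (S2 b) (r\<^sup>2) / sqrt (b\<^sup>2 - r\<^sup>2)) + poly T2 (r\<^sup>2)"
    using assms(2) unfolding good_def by blast
  have T: "T1 + T2 = 0 \<or> 2 * degree (T1 + T2) < d"
  proof (cases "T1 = 0")
    case True then show ?thesis using 2(2) by simp
  next
    case False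
    show ?thesis
    proof (cases "T2 = 0")
      case True then show ?thesis using 1(2) by simp
    next
      case False
      then show ?thesis using \<open>T1 \<noteq> 0\<close> 1(2) 2(2) degree_add_le_max[of T1 T2] by linarith
    qed
  qed
  show ?thesis unfolding good_def
  proof (intro exI[of _ "\<lambda>b. S1 b + S2 b"] exI[of _ "T1 + T2"] conjI ballI allI impI)
    fix b assume "b \<in> B"
    then show "degree (S1 b + S2 b) \<le> d div 2" using 1(1) 2(1) degree_add_le_max[of "S1 b" "S2 b"] by fastforce
  next
    show "T1 + T2 = 0 \<or> 2 * degree (T1 + T2) < d" by (rule T)
  next
    fix r :: real assume r: "0 < r \<and> r < m"
    show "f r + g r = (\<Sum>b\<in>B. poly (S1 b + S2 b) (r\<^sup>2) / sqrt (b\<^sup>2 - r\<^sup>2)) + poly (T1 + T2) (r\<^sup>2)"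
      using 1(3) 2(3) r by (simp add: add_divide_distrib sum.distrib)
  qed
qed

lemma good_cmult:
  assumes "good B m d f"
  shows "good B m d (\<lambda>r. k * f r)"
proof -
  obtain S1 T1 where 1: "\<forall>b\<in>B. degree (S1 b) \<le> d div 2" "T1 = 0 \<or> 2 * degree T1 < d"
    "\<forall>r. 0 < r \<and> r < m \<longrightarrow> f r = (\<Sum>b\<in>B. poly (S1 b) (r\<^sup>2) / sqrt (b\<^sup>2 - r\<^sup>2)) + poly T1 (r\<^sup>2)"
    using assms(1) unfolding good_def by blast
  show ?thesis unfolding good_def
  proof (intro exI[of _ "\<lambda>b. smult k (S1 b)"] exI[of _ "smult k T1"] conjI ballI allI impI)
    fix b assume "b \<in> B"
    then show "degree (smult k (S1 b)) \<le> d div 2" using 1(1) degree_smult_le[of k "S1 b"] by fastforce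
  next
    show "smult k T1 = 0 \<or> 2 * degree (smult k T1) < d" using 1(2) degree_smult_le[of k T1] by auto
  next
    fix r :: real assume r: "0 < r \<and> r < m"
    show "k * f r = (\<Sum>b\<in>B. poly (smult k (S1 b)) (r\<^sup>2) / sqrt (b\<^sup>2 - r\<^sup>2)) + poly (smult k T1) (r\<^sup>2)"
      using 1(3) r by (simp add: sum_distrib_left distrib_left)
  qed
qed

lemma good_sum:
  assumes "finite I" "\<And>i. i \<in> I \<Longrightarrow> good B m d (f i)"
  shows "good B m d (\<lambda>r. \<Sum>i\<in>I. f i r)"
  using assms
proof (induction I rule: finite_induct)
  case empty then show ?case by (simp add: good_zero)
next
  case (insert x F)
  then show ?case by (simp add: good_add)
qed

lemma good_mono:
  assumes "good B m d f" "d \<le> d'"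
  shows "good B m d' f"
proof -
  obtain S T where 1: "\<forall>b\<in>B. degree (S b) \<le> d div 2" "T = 0 \<or> 2 * degree T < d"
    "\<forall>r. 0 < r \<and> r < m \<longrightarrow> f r = (\<Sum>b\<in>B. poly (S b) (r\<^sup>2) / sqrt (b\<^sup>2 - r\<^sup>2)) + poly T (r\<^sup>2)"
    using assms(1) unfolding good_def by blast
  have "\<forall>b\<in>B. degree (S b) \<le> d' div 2" using 1(1) div_le_mono[OF assms(2), of 2] le_trans by blast
  moreover have "T = 0 \<or> 2 * degree T < d'" using 1(2) assms(2) by auto
  ultimately show ?thesis unfolding good_def using 1(3) by blast
qed

lemma good_rho:
  assumes "good B m d f" "d' = d + 2 * e"
  shows "good B m d' (\<lambda>r. (r\<^sup>2) ^ e * f r)"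
proof -
  obtain S1 T1 where 1: "\<forall>b\<in>B. degree (S1 b) \<le> d div 2" "T1 = 0 \<or> 2 * degree T1 < d"
    "\<forall>r. 0 < r \<and> r < m \<longrightarrow> f r = (\<Sum>b\<in>B. poly (S1 b) (r\<^sup>2) / sqrt (b\<^sup>2 - r\<^sup>2)) + poly T1 (r\<^sup>2)"
    using assms(1) unfolding good_def by blast
  have dm: "degree (monom 1 e * p) \<le> e + degree p" for p :: "real poly"
    using degree_mult_le[of "monom 1 e" p] degree_monom_le[of "1::real" e] by linarith
  show ?thesis unfolding good_def
  proof (intro exI[of _ "\<lambda>b. monom 1 e * S1 b"] exI[of _ "monom 1 e * T1"] conjI ballI allI impI)
    fix b assume "b \<in> B"
    then show "degree (monom 1 e * S1 b) \<le> d' div 2" using 1(1) dm[of "S1 b"] assms(2) by fastforce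
  next
    show "monom 1 e * T1 = 0 \<or> 2 * degree (monom 1 e * T1) < d'"
      using 1(2) dm[of T1] assms(2) by auto
  next
    fix r :: real assume r: "0 < r \<and> r < m"
    show "(r\<^sup>2) ^ e * f r = (\<Sum>b\<in>B. poly (monom 1 e * S1 b) (r\<^sup>2) / sqrt (b\<^sup>2 - r\<^sup>2)) + poly (monom 1 e * T1) (r\<^sup>2)"
      using 1(3) r by (simp add: sum_distrib_left distrib_left poly_monom mult.assoc)
  qed
qed

lemma good_single:
  assumes "finite B" "b \<in> B"
  shows "good B m d (\<lambda>r. k / sqrt (b\<^sup>2 - r\<^sup>2))"
  unfolding good_def
proof (intro exI[of _ "\<lambda>b'. if b' = b then [:k:] else 0"] exI[of _ 0] conjI ballI allI impI)
  fix r :: real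
  have "(\<Sum>b'\<in>B. poly (if b' = b then [:k:] else 0) (r\<^sup>2) / sqrt (b'\<^sup>2 - r\<^sup>2))
      = (\<Sum>b'\<in>B. if b' = b then k / sqrt (b\<^sup>2 - r\<^sup>2) else 0)"
    by (rule sum.cong) auto
  also have "\<dots> = k / sqrt (b\<^sup>2 - r\<^sup>2)" using sum.delta[OF assms(1), of b "\<lambda>_. k / sqrt (b\<^sup>2 - r\<^sup>2)"] assms(2) by simp
  finally show "k / sqrt (b\<^sup>2 - r\<^sup>2) = (\<Sum>b'\<in>B. poly (if b' = b then [:k:] else 0) (r\<^sup>2) / sqrt (b'\<^sup>2 - r\<^sup>2)) + poly 0 (r\<^sup>2)"
    by simp
next
  fix b' assume "b' \<in> B"
  show "degree (if b' = b then [:k:] else 0) \<le> d div 2" by simp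
next
  show "(0::real poly) = 0 \<or> 2 * degree (0::real poly) < d" by simp
qed

lemma good_T:
  assumes "d = 2 * e + 1"
  shows "good B m d (\<lambda>r. k * (r\<^sup>2) ^ e)"
  unfolding good_def
proof (intro exI[of _ "\<lambda>_. 0"] exI[of _ "monom k e"] conjI ballI allI impI)
  show "monom k e = 0 \<or> 2 * degree (monom k e) < d"
    using assms degree_monom_le[of k e] by auto
next
  fix r :: real
  show "k * (r\<^sup>2) ^ e = (\<Sum>b\<in>B. poly 0 (r\<^sup>2) / sqrt (b\<^sup>2 - r\<^sup>2)) + poly (monom k e) (r\<^sup>2)"
    by (simp add: poly_monom)
qed simp




definition Cc :: "nat \<Rightarrow> real" where "Cc u = integral {0..2*pi} (\<lambda>t. cos t ^ u)"

lemma Cc_odd: assumes "odd u" shows "Cc u = 0"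
proof -
  have int: "(\<lambda>t. cos t ^ u) integrable_on {0..2*pi}"
    by (intro integrable_continuous_interval continuous_intros)
  have "integral {0..pi} (\<lambda>t. cos t ^ u) = 0"
  proof (rule integral_antisym_zero)
    fix t :: real
    have "cos (0 + pi - t) = - cos t" by simp
    then show "cos (0 + pi - t) ^ u = - (cos t ^ u)" using assms by (simp add: power_minus_odd)
  qed
  moreover have "integral {pi..2*pi} (\<lambda>t. cos t ^ u) = 0"
  proof (rule integral_antisym_zero)
    fix t :: real
    have "cos (pi + 2 * pi - t) = - cos t"
      by (simp add: cos_diff)
    then show "cos (pi + 2 * pi - t) ^ u = - (cos t ^ u)" using assms by (simp add: power_minus_odd)
  qed
  ultimately show ?thesis
    unfolding Cc_def using Henstock_Kurzweil_Integration.integral_combine[where a=0 and c=pi and b="2*pi", OF _ _ int] by simp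
qed

lemma has_integral_cospow: "((\<lambda>t. (r * cos t) ^ u) has_integral (r ^ u * Cc u)) {0..2*pi}"
proof -
  have "((\<lambda>t. cos t ^ u) has_integral Cc u) {0..2*pi}"
    unfolding Cc_def
    by (intro integrable_integral integrable_continuous_interval continuous_intros)
  from has_integral_mult_right[OF this, of "r ^ u"] show ?thesis by (simp add: power_mult_distrib)
qed

lemma has_integral_Jc:
  fixes c r :: real
  assumes "0 < r" "r < \<bar>c\<bar>"
  shows "((\<lambda>t. 1 / (r * cos t - c)) has_integral (- sgn c * 2 * pi / sqrt (\<bar>c\<bar>\<^sup>2 - r\<^sup>2))) {0..2*pi}"
proof (cases "c > 0")
  case True
  have hJ: "((\<lambda>t. 1 / (c + (-r) * cos t)) has_integral (2*pi / sqrt (c\<^sup>2 - (-r)\<^sup>2))) {0..2*pi}"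
    by (rule J_integral) (use assms True in auto)
  have eq: "(\<lambda>t. 1 / (r * cos t - c)) = (\<lambda>t. - (1 / (c + (-r) * cos t)))"
  proof (rule ext)
    fix t
    have "r * cos t - c = - (c + (-r) * cos t)" by simp
    then show "1 / (r * cos t - c) = - (1 / (c + (-r) * cos t))" by (simp only: divide_minus_right)
  qed
  from has_integral_neg[OF hJ] show ?thesis using True unfolding eq
    by simp
next
  case False
  then have c: "c < 0" using assms by auto
  have "((\<lambda>t. 1 / (-c + r * cos t)) has_integral (2*pi / sqrt ((-c)\<^sup>2 - r\<^sup>2))) {0..2*pi}"
    by (rule J_integral) (use assms c in auto)
  then show ?thesis using c by (simp add: algebra_simps)
qed

lemma good_pow:
  assumes "u < m"
  shows "good B mn m (\<lambda>r. r ^ u * Cc u)"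
proof (cases "even u")
  case True
  then obtain e where e: "u = 2 * e" by blast
  have "good B mn (2 * e + 1) (\<lambda>r. Cc u * (r\<^sup>2) ^ e)" by (rule good_T) simp
  then have "good B mn m (\<lambda>r. Cc u * (r\<^sup>2) ^ e)" by (rule good_mono) (use assms e in simp)
  then show ?thesis by (rule good_cong) (metis e power_mult mult.commute)
next
  case False
  then show ?thesis using good_zero[of B mn m] by (simp add: Cc_odd)
qed

lemma good_core:
  fixes A :: "real set"
  assumes A: "finite A" "A \<noteq> {}" and mn: "\<forall>c\<in>A. mn \<le> \<bar>c\<bar>" and B: "B = abs ` A"
  shows "good B mn m (\<lambda>r. integral {0..2*pi} (\<lambda>t. (r * cos t) ^ m / (\<Prod>c\<in>A. (r * cos t - c))))"
proof -
  define V where "V r = (\<Sum>c\<in>A. lw A c * (c ^ m * (- sgn c * 2 * pi / sqrt (\<bar>c\<bar>\<^sup>2 - r\<^sup>2))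
            + (\<Sum>u<m. c ^ (m - Suc u) * (r ^ u * Cc u))))" for r
  have gV: "good B mn m V"
    unfolding V_def
    by (intro good_sum good_cmult good_add A(1) finite_lessThan good_single good_pow) (use A B in auto)
  show ?thesis
  proof (rule good_cong[OF gV])
    fix r :: real assume r: "0 < r" "r < mn"
    have rc: "r < \<bar>c\<bar>" if "c \<in> A" for c using mn that r by force
    have ne: "r * cos t - c \<noteq> 0" if "c \<in> A" for c t
    proof -
      have "\<bar>r * cos t\<bar> \<le> r" using r by (simp add: abs_mult mult_left_le)
      then show ?thesis using rc[OF that] by auto
    qed
    have notin: "r * cos t \<notin> A" for t using ne by fastforce
    have HI: "((\<lambda>t. \<Sum>c\<in>A. lw A c * (c ^ m * (1 / (r * cos t - c))
            + (\<Sum>u<m. c ^ (m - Suc u) * (r * cos t) ^ u))) has_integral V r) {0..2*pi}"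
      unfolding V_def
      by (intro has_integral_sum A(1) finite_lessThan has_integral_mult_right has_integral_add
          has_integral_Jc has_integral_cospow r rc)
    have pw: "(r * cos t) ^ m / (\<Prod>c\<in>A. (r * cos t - c)) =
       (\<Sum>c\<in>A. lw A c * (c ^ m * (1 / (r * cos t - c)) + (\<Sum>u<m. c ^ (m - Suc u) * (r * cos t) ^ u)))" for t
    proof -
      let ?x = "r * cos t"
      have "?x ^ m / (\<Prod>c\<in>A. (?x - c)) = ?x ^ m * (\<Sum>c\<in>A. lw A c / (?x - c))"
        using lagrange_pf[OF A notin[of t]] by (simp add: divide_inverse)
      also have "\<dots> = (\<Sum>c\<in>A. lw A c * (?x ^ m / (?x - c)))"
        by (subst sum_distrib_left) (simp add: ac_simps)
      also have "\<dots> = (\<Sum>c\<in>A. lw A c * (c ^ m * (1 / (?x - c)) + (\<Sum>u<m. c ^ (m - Suc u) * ?x ^ u)))"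
      proof (rule sum.cong[OF refl])
        fix c assume c: "c \<in> A"
        have "?x ^ m - c ^ m = (?x - c) * (\<Sum>u<m. c ^ (m - Suc u) * ?x ^ u)"
          by (rule power_diff_sumr2)
        then have "?x ^ m / (?x - c) = c ^ m * (1 / (?x - c)) + (\<Sum>u<m. c ^ (m - Suc u) * ?x ^ u)"
          using ne[OF c, of t] by (simp add: field_simps)
        then show "lw A c * (?x ^ m / (?x - c)) = lw A c * (c ^ m * (1 / (?x - c)) + (\<Sum>u<m. c ^ (m - Suc u) * ?x ^ u))"
          by simp
      qed
      finally show ?thesis .
    qed
    show "V r = integral {0..2*pi} (\<lambda>t. (r * cos t) ^ m / (\<Prod>c\<in>A. (r * cos t - c)))"
      using integral_unique[OF HI] pw by simp
  qed
qed




lemma cont_core: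
  fixes A :: "real set"
  assumes "finite A" "\<And>c t. c \<in> A \<Longrightarrow> r * cos t - c \<noteq> 0"
  shows "continuous_on {0..2*pi} (\<lambda>t. (r * cos t) ^ i * (r * sin t) ^ j / (\<Prod>c\<in>A. (r * cos t - c)))"
  using assms by (intro continuous_intros) (auto simp: prod_zero_iff)

lemma good_mon:
  fixes A :: "real set"
  assumes A: "finite A" "A \<noteq> {}" and mn: "\<forall>c\<in>A. mn \<le> \<bar>c\<bar>" and B: "B = abs ` A"
  shows "good B mn (i + j) (\<lambda>r. integral {0..2*pi} (\<lambda>t. (r * cos t) ^ i * (r * sin t) ^ j / (\<Prod>c\<in>A. (r * cos t - c))))"
proof (cases "even j")
  case False
  show ?thesis
  proof (rule good_cong[OF good_zero])
    fix r :: real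
    show "0 = integral {0..2*pi} (\<lambda>t. (r * cos t) ^ i * (r * sin t) ^ j / (\<Prod>c\<in>A. (r * cos t - c)))"
    proof (rule sym, rule integral_antisym_zero)
      fix t :: real
      have "cos (0 + 2 * pi - t) = cos t" "sin (0 + 2*pi - t) = - sin t"
        by (simp_all add: cos_diff sin_diff)
      then show "(r * cos (0 + 2 * pi - t)) ^ i * (r * sin (0 + 2 * pi - t)) ^ j / (\<Prod>c\<in>A. (r * cos (0 + 2 * pi - t) - c))
          = - ((r * cos t) ^ i * (r * sin t) ^ j / (\<Prod>c\<in>A. (r * cos t - c)))"
        using False by (simp add: power_minus_odd)
    qed
  qed
next
  case True
  then obtain k where k: "j = 2 * k" by blast
  define core where "core m r = integral {0..2*pi} (\<lambda>t. (r * cos t) ^ m / (\<Prod>c\<in>A. (r * cos t - c)))" for m r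
  have gc: "good B mn (i + 2 * l) (core (i + 2 * l))" for l
    unfolding core_def by (rule good_core[OF A mn B])
  have g: "good B mn (i + j) (\<lambda>r. \<Sum>l\<in>{..k}. (of_nat (k choose l) * (-1) ^ l) * ((r\<^sup>2) ^ (k - l) * core (i + 2 * l) r))"
  proof (intro good_sum good_cmult finite_atMost)
    fix l assume l: "l \<in> {..k}"
    show "good B mn (i + j) (\<lambda>r. (r\<^sup>2) ^ (k - l) * core (i + 2 * l) r)"
      by (rule good_rho[OF gc]) (use l k in auto)
  qed
  show ?thesis
  proof (rule good_cong[OF g])
    fix r :: real assume r: "0 < r" "r < mn"
    have rc: "r < \<bar>c\<bar>" if "c \<in> A" for c using mn that r by force
    have ne: "r * cos t - c \<noteq> 0" if "c \<in> A" for c t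
    proof -
      have "\<bar>r * cos t\<bar> \<le> r" using r by (simp add: abs_mult mult_left_le)
      then show ?thesis using rc[OF that] by auto
    qed
    have HI: "((\<lambda>t. \<Sum>l\<in>{..k}. (of_nat (k choose l) * (-1) ^ l) * ((r\<^sup>2) ^ (k - l) *
          ((r * cos t) ^ (i + 2 * l) / (\<Prod>c\<in>A. (r * cos t - c)))))
        has_integral (\<Sum>l\<in>{..k}. (of_nat (k choose l) * (-1) ^ l) * ((r\<^sup>2) ^ (k - l) * core (i + 2 * l) r))) {0..2*pi}"
    proof (intro has_integral_sum finite_atMost has_integral_mult_right)
      fix l
      have "continuous_on {0..2*pi} (\<lambda>t. (r * cos t) ^ (i + 2 * l) * (r * sin t) ^ 0 / (\<Prod>c\<in>A. (r * cos t - c)))"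
        by (rule cont_core[OF A(1) ne])
      then have "(\<lambda>t. (r * cos t) ^ (i + 2 * l) / (\<Prod>c\<in>A. (r * cos t - c))) integrable_on {0..2*pi}"
        using integrable_continuous_interval by simp
      then show "((\<lambda>t. (r * cos t) ^ (i + 2 * l) / (\<Prod>c\<in>A. (r * cos t - c))) has_integral core (i + 2 * l) r) {0..2*pi}"
        unfolding core_def by (rule integrable_integral)
    qed
    have pw: "(r * cos t) ^ i * (r * sin t) ^ j / (\<Prod>c\<in>A. (r * cos t - c)) =
       (\<Sum>l\<in>{..k}. (of_nat (k choose l) * (-1) ^ l) * ((r\<^sup>2) ^ (k - l) *
          ((r * cos t) ^ (i + 2 * l) / (\<Prod>c\<in>A. (r * cos t - c)))))" for t
    proof -
      let ?x = "r * cos t" and ?D = "\<Prod>c\<in>A. (r * cos t - c)"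
      have s2: "(r * sin t)\<^sup>2 = - (?x\<^sup>2) + r\<^sup>2"
        by (simp add: power_mult_distrib sin_squared_eq algebra_simps)
      have "(r * sin t) ^ j = ((r * sin t)\<^sup>2) ^ k" by (simp add: k power_mult)
      also have "\<dots> = (\<Sum>l\<in>{..k}. of_nat (k choose l) * (- (?x\<^sup>2)) ^ l * (r\<^sup>2) ^ (k - l))"
        unfolding s2 by (rule binomial_ring)
      finally have e: "(r * sin t) ^ j = (\<Sum>l\<in>{..k}. of_nat (k choose l) * (- (?x\<^sup>2)) ^ l * (r\<^sup>2) ^ (k - l))" .
      have "?x ^ i * (r * sin t) ^ j / ?D = (\<Sum>l\<in>{..k}. ?x ^ i * (of_nat (k choose l) * (- (?x\<^sup>2)) ^ l * (r\<^sup>2) ^ (k - l)) / ?D)"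
        unfolding e by (simp add: sum_distrib_left sum_divide_distrib)
      also have "\<dots> = (\<Sum>l\<in>{..k}. (of_nat (k choose l) * (-1) ^ l) * ((r\<^sup>2) ^ (k - l) * (?x ^ (i + 2 * l) / ?D)))"
      proof (rule sum.cong[OF refl])
        fix l
        have "(- (?x\<^sup>2)) ^ l = (-1) ^ l * ?x ^ (2 * l)"
          by (subst power_minus) (simp add: power_mult)
        then show "?x ^ i * (of_nat (k choose l) * (- (?x\<^sup>2)) ^ l * (r\<^sup>2) ^ (k - l)) / ?D
            = (of_nat (k choose l) * (-1) ^ l) * ((r\<^sup>2) ^ (k - l) * (?x ^ (i + 2 * l) / ?D))"
          by (simp add: power_add mult_ac)
      qed
      finally show ?thesis .
    qed
    show "(\<Sum>l\<in>{..k}. (of_nat (k choose l) * (-1) ^ l) * ((r\<^sup>2) ^ (k - l) * core (i + 2 * l) r))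
        = integral {0..2*pi} (\<lambda>t. (r * cos t) ^ i * (r * sin t) ^ j / (\<Prod>c\<in>A. (r * cos t - c)))"
      using integral_unique[OF HI] pw by simp
  qed
qed




lemma floor_half: "\<lfloor>(real n - 1) / 2\<rfloor> + 1 = int ((n + 1) div 2)"
proof -
  have "\<lfloor>(real n - 1) / 2\<rfloor> + 1 = \<lfloor>(real n - 1) / 2 + of_int 1\<rfloor>" by (rule floor_add_int)
  also have "(real n - 1) / 2 + of_int 1 = real (n + 1) / real 2" by (simp add: field_simps)
  also have "\<lfloor>real (n + 1) / real 2\<rfloor> = int ((n + 1) div 2)" by (rule floor_divide_of_nat_eq)
  finally show ?thesis .
qed

lemma bip_lin: "bipoly_eval c n x y / D * z = (\<Sum>i\<le>n. \<Sum>j\<le>n - i. c i j * (x ^ i * y ^ j * z / D))"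
  unfolding bipoly_eval_def by (simp add: sum_divide_distrib sum_distrib_right sum_distrib_left mult_ac)

theorem proposition2p3:
  fixes K n :: nat and p q :: "nat \<Rightarrow> nat \<Rightarrow> real" and a :: "nat \<Rightarrow> real"
  assumes "K \<ge> 1"
    and "bipoly_degree p n" and "bipoly_degree q n"
    and "inj_on a {1..K}" and "\<forall>j\<in>{1..K}. a j \<noteq> 0"
  shows "\<exists>(S :: real \<Rightarrow> real poly) (T :: real poly).
     (\<forall>b\<in>(\<lambda>j. \<bar>a j\<bar>) ` {1..K}. int (degree (S b)) \<le> \<lfloor>(real n - 1) / 2\<rfloor> + 1)
     \<and> degree T \<le> n div 2
     \<and> (\<forall>r. 0 < r \<and> r < Min ((\<lambda>j. \<bar>a j\<bar>) ` {1..K}) \<longrightarrow>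
          circle_line_integral
            (\<lambda>x y. bipoly_eval q n x y / (\<Prod>j=1..K. (x - a j)))
            (\<lambda>x y. - bipoly_eval p n x y / (\<Prod>j=1..K. (x - a j))) r
          = (\<Sum>b\<in>(\<lambda>j. \<bar>a j\<bar>) ` {1..K}. poly (S b) (r\<^sup>2) / sqrt (b\<^sup>2 - r\<^sup>2))
            + poly T (r\<^sup>2))"
proof -
  define A where "A = a ` {1..K}"
  define B where "B = (\<lambda>j. \<bar>a j\<bar>) ` {1..K}"
  define mn where "mn = Min B"
  have finA: "finite A" unfolding A_def by simp
  have neA: "A \<noteq> {}" unfolding A_def using assms(1) by auto
  have BA: "B = abs ` A" unfolding A_def B_def by (simp add: image_image)
  have finB: "finite B" unfolding BA using finA by simp
  have mnA: "\<forall>c\<in>A. mn \<le> \<bar>c\<bar>" unfolding mn_def BA using finA by (auto intro: Min_le)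
  have Deq: "(\<Prod>j=1..K. (x - a j)) = (\<Prod>c\<in>A. (x - c))" for x
    unfolding A_def using prod.reindex[OF assms(4), of "\<lambda>c. x - c"] by (simp add: o_def)
  define Mon where "Mon i j r = integral {0..2*pi} (\<lambda>t. (r * cos t) ^ i * (r * sin t) ^ j / (\<Prod>c\<in>A. (r * cos t - c)))" for i j r
  define V where "V r = (\<Sum>i\<le>n. \<Sum>j\<le>n - i. (- q i j) * Mon i (Suc j) r + (- p i j) * Mon (Suc i) j r)" for r
  have gV: "good B mn (n + 1) V"
    unfolding V_def
  proof (intro good_sum good_add good_cmult finite_atMost)
    fix i j assume i: "i \<in> {..n}" and j: "j \<in> {..n - i}"
    show "good B mn (n + 1) (Mon i (Suc j))"
      unfolding Mon_def by (rule good_mono[OF good_mon[OF finA neA mnA BA]]) (use i j in auto)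
    show "good B mn (n + 1) (Mon (Suc i) j)"
      unfolding Mon_def by (rule good_mono[OF good_mon[OF finA neA mnA BA]]) (use i j in auto)
  qed
  have gI: "good B mn (n + 1) (\<lambda>r. circle_line_integral
            (\<lambda>x y. bipoly_eval q n x y / (\<Prod>j=1..K. (x - a j)))
            (\<lambda>x y. - bipoly_eval p n x y / (\<Prod>j=1..K. (x - a j))) r)"
  proof (rule good_cong[OF gV])
    fix r :: real assume r: "0 < r" "r < mn"
    have rc: "r < \<bar>c\<bar>" if "c \<in> A" for c using mnA that r by force
    have ne: "r * cos t - c \<noteq> 0" if "c \<in> A" for c t
    proof -
      have "\<bar>r * cos t\<bar> \<le> r" using r by (simp add: abs_mult mult_left_le)
      then show ?thesis using rc[OF that] by auto
    qed
    have hM: "((\<lambda>t. (r * cos t) ^ i * (r * sin t) ^ j / (\<Prod>c\<in>A. (r * cos t - c))) has_integral Mon i j r) {0..2*pi}" for i j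
      unfolding Mon_def
      by (intro integrable_integral integrable_continuous_interval cont_core[OF finA ne])
    have HI: "((\<lambda>t. \<Sum>i\<le>n. \<Sum>j\<le>n - i.
          (- q i j) * ((r * cos t) ^ i * (r * sin t) ^ (Suc j) / (\<Prod>c\<in>A. (r * cos t - c)))
        + (- p i j) * ((r * cos t) ^ (Suc i) * (r * sin t) ^ j / (\<Prod>c\<in>A. (r * cos t - c)))) has_integral V r) {0..2*pi}"
      unfolding V_def by (intro has_integral_sum finite_atMost has_integral_add has_integral_mult_right hM)
    have pw: "bipoly_eval q n (r * cos t) (r * sin t) / (\<Prod>j=1..K. (r * cos t - a j)) * (- r * sin t)
        + (- bipoly_eval p n (r * cos t) (r * sin t) / (\<Prod>j=1..K. (r * cos t - a j))) * (r * cos t)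
      = (\<Sum>i\<le>n. \<Sum>j\<le>n - i.
          (- q i j) * ((r * cos t) ^ i * (r * sin t) ^ (Suc j) / (\<Prod>c\<in>A. (r * cos t - c)))
        + (- p i j) * ((r * cos t) ^ (Suc i) * (r * sin t) ^ j / (\<Prod>c\<in>A. (r * cos t - c))))" for t
    proof -
      let ?x = "r * cos t" and ?y = "r * sin t" and ?D = "\<Prod>c\<in>A. (r * cos t - c)"
      have "(- bipoly_eval p n ?x ?y / ?D) * ?x = bipoly_eval p n ?x ?y / ?D * (- ?x)" by simp
      moreover have "- r * sin t = - ?y" by simp
      ultimately have "bipoly_eval q n ?x ?y / ?D * (- r * sin t) + (- bipoly_eval p n ?x ?y / ?D) * ?x
          = bipoly_eval q n ?x ?y / ?D * (- ?y) + bipoly_eval p n ?x ?y / ?D * (- ?x)" by simp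
      also have "\<dots> = (\<Sum>i\<le>n. \<Sum>j\<le>n - i. q i j * (?x ^ i * ?y ^ j * (- ?y) / ?D))
          + (\<Sum>i\<le>n. \<Sum>j\<le>n - i. p i j * (?x ^ i * ?y ^ j * (- ?x) / ?D))"
        by (simp only: bip_lin)
      also have "\<dots> = (\<Sum>i\<le>n. \<Sum>j\<le>n - i. q i j * (?x ^ i * ?y ^ j * (- ?y) / ?D) + p i j * (?x ^ i * ?y ^ j * (- ?x) / ?D))"
        by (simp only: sum.distrib)
      also have "\<dots> = (\<Sum>i\<le>n. \<Sum>j\<le>n - i.
          (- q i j) * (?x ^ i * ?y ^ (Suc j) / ?D) + (- p i j) * (?x ^ (Suc i) * ?y ^ j / ?D))"
        by (intro sum.cong refl) (simp add: mult_ac)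
      finally show ?thesis unfolding Deq .
    qed
    show "V r = circle_line_integral
            (\<lambda>x y. bipoly_eval q n x y / (\<Prod>j=1..K. (x - a j)))
            (\<lambda>x y. - bipoly_eval p n x y / (\<Prod>j=1..K. (x - a j))) r"
      unfolding circle_line_integral_def using integral_unique[OF HI] pw by simp
  qed
  then obtain S T where ST: "\<forall>b\<in>B. degree (S b) \<le> (n + 1) div 2" "T = 0 \<or> 2 * degree T < n + 1"
    "\<forall>r. 0 < r \<and> r < mn \<longrightarrow> circle_line_integral
            (\<lambda>x y. bipoly_eval q n x y / (\<Prod>j=1..K. (x - a j)))
            (\<lambda>x y. - bipoly_eval p n x y / (\<Prod>j=1..K. (x - a j))) r
        = (\<Sum>b\<in>B. poly (S b) (r\<^sup>2) / sqrt (b\<^sup>2 - r\<^sup>2)) + poly T (r\<^sup>2)"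
    using gI unfolding good_def by (elim exE conjE) (rule that, assumption+)
  show ?thesis
  proof (intro exI[of _ S] exI[of _ T] conjI)
    show "\<forall>b\<in>(\<lambda>j. \<bar>a j\<bar>) ` {1..K}. int (degree (S b)) \<le> \<lfloor>(real n - 1) / 2\<rfloor> + 1"
      using ST(1) unfolding B_def floor_half by auto
    show "degree T \<le> n div 2"
    proof (cases "T = 0")
      case False
      then have "2 * degree T < n + 1" using ST(2) by simp
      then show ?thesis by presburger
    qed simp
    show "\<forall>r. 0 < r \<and> r < Min ((\<lambda>j. \<bar>a j\<bar>) ` {1..K}) \<longrightarrow>
          circle_line_integral
            (\<lambda>x y. bipoly_eval q n x y / (\<Prod>j=1..K. (x - a j)))
            (\<lambda>x y. - bipoly_eval p n x y / (\<Prod>j=1..K. (x - a j))) r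
          = (\<Sum>b\<in>(\<lambda>j. \<bar>a j\<bar>) ` {1..K}. poly (S b) (r\<^sup>2) / sqrt (b\<^sup>2 - r\<^sup>2))
            + poly T (r\<^sup>2)"
      by (rule ST(3)[unfolded mn_def B_def])
  qed
qed


end
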